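(* Let $\|w\|_{L^\infty(\Omega)}\le\bar c_0\le\bar v/\sqrt5$ and $\|w_x\|_{L^\infty(\Omega)}\le\bar c_1$, and let $\underline v^2:=\bar v^2-\bar c_0^2$. Then for any $\xi\in X$ and $\delta\xi\in\delta X$, the first directional derivative of $f$ satisfies (pointwise in $\tau$) $$|f'(\xi,\xi_\tau)[\delta\xi,\delta\xi_\tau]|\le\bar\alpha_0\|\xi_\tau\|\|\delta\xi\|+\bar\alpha_1\|\delta\xi_\tau\|,\qquad\bar\alpha_0=\frac{21\bar c_1}{4\underline v^2},\ \ \bar\alpha_1=\frac{7}{2\underline v}.$$
   Context: Fix $\bar v>0$, $x_O\ne x_D\in\mathbb R^2$, $w\in C^3(\mathbb R^2,\mathbb R^2)$ with $\|w(x)\|<\bar v$; $w_x$ is its Jacobian (operator norm); $\Omega\subset\mathbb R^2$ is an ellipse with foci $x_O,x_D$ containing every globally optimal trajectory, and $\|g\|_{L^\infty(\Omega)}$ is the essential supremum over $\Omega$ of the pointwise norm. $f(x,p)=\frac{-p^Tw(x)+\sqrt{(p^Tw(x))^2+(\bar v^2-w(x)^Tw(x))p^Tp}}{\bar v^2-w(x)^Tw(x)}$; $f'(\xi,\xi_\tau)[\delta\xi,\delta\xi_\tau]$ is the derivative of $f$ with respect to $(x,p)$ at $(\xi(\tau),\xi_\tau(\tau))$ in direction $(\delta\xi(\tau),\delta\xi_\tau(\tau))$. $X=\{\xi\in W^{1,\infty}(]0,1[,\mathbb R^2):\xi(0)=x_O,\xi(1)=x_D\}$, $\delta X=W_0^{1,\infty}(]0,1[,\mathbb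 R^2)$; subscript $\tau$ denotes the derivative; $\|\cdot\|$ is the Euclidean norm. *)

theory Defs
  imports "HOL-Analysis.Analysis"
begin

text \<open>The cost integrand f(x,p) of the paper (travel time density).\<close>
definition fcost :: "real \<Rightarrow> (real^2 \<Rightarrow> real^2) \<Rightarrow> real^2 \<Rightarrow> real^2 \<Rightarrow> real" where
  "fcost vbar w x p =
     (- (p \<bullet> w x) + sqrt ((p \<bullet> w x)^2 + (vbar^2 - w x \<bullet> w x) * (p \<bullet> p)))
     / (vbar^2 - w x \<bullet> w x)"

definition ellipse :: "real^2 \<Rightarrow> real^2 \<Rightarrow> real \<Rightarrow> (real^2) set" where
  "ellipse xO xD a = {x. dist x xO + dist x xD < a}"

definition C3 :: "(real^2 \<Rightarrow> real^2) \<Rightarrow> bool" where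
  "C3 w \<longleftrightarrow> (\<exists>(D1 :: real^2 \<Rightarrow> ((real^2) \<Rightarrow>\<^sub>L (real^2)))
        (D2 :: real^2 \<Rightarrow> ((real^2) \<Rightarrow>\<^sub>L ((real^2) \<Rightarrow>\<^sub>L (real^2))))
        (D3 :: real^2 \<Rightarrow> ((real^2) \<Rightarrow>\<^sub>L ((real^2) \<Rightarrow>\<^sub>L ((real^2) \<Rightarrow>\<^sub>L (real^2))))).
      (\<forall>x. (w has_derivative blinfun_apply (D1 x)) (at x)) \<and>
      (\<forall>x. (D1 has_derivative blinfun_apply (D2 x)) (at x)) \<and>
      (\<forall>x. (D2 has_derivative blinfun_apply (D3 x)) (at x)) \<and>
      continuous_on UNIV D3)"

text \<open>X: W^{1,infty} (= Lipschitz) curves on [0,1] from xO to xD; deltaX: with zero ends.\<close>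
definition trajX :: "real^2 \<Rightarrow> real^2 \<Rightarrow> (real \<Rightarrow> real^2) set" where
  "trajX xO xD = {\<xi>. (\<exists>L. L-lipschitz_on {0..1} \<xi>) \<and> \<xi> 0 = xO \<and> \<xi> 1 = xD}"

definition deltaX :: "(real \<Rightarrow> real^2) set" where
  "deltaX = {\<eta>. (\<exists>L. L-lipschitz_on {0..1} \<eta>) \<and> \<eta> 0 = 0 \<and> \<eta> 1 = 0}"

end

theory Submission
  imports Defs
begin


lemma alg_bound:
  fixes v c0 c1 W P Q H lnn b0 qw pl wl pq sq s u a0 :: real
  assumes a0: "a0 = v^2 - W^2" and sq: "sq > 0" "sq^2 = a0"
    and W: "0 \<le> W" "W \<le> c0" and c0: "5 * c0^2 \<le> v^2"
    and u: "u > 0" "u^2 = v^2 - c0^2"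
    and s: "s \<ge> 0" "s^2 = b0^2 + a0 * P^2" and P: "P > 0"
    and b0: "\<bar>b0\<bar> \<le> P * W" and qw: "\<bar>qw\<bar> \<le> Q * W" and pl: "\<bar>pl\<bar> \<le> P * lnn"
    and wl: "\<bar>wl\<bar> \<le> W * lnn" and pq: "\<bar>pq\<bar> \<le> P * Q"
    and lnn: "lnn \<le> c1 * H" "0 \<le> lnn" and H: "0 \<le> H" and Q: "0 \<le> Q"
  shows "\<bar>(-qw + (b0*qw + a0*pq)/s)/a0 + ((-pl + (b0*pl - wl*P^2)/s)/a0 + 2*(s-b0)*wl/a0^2)\<bar>
     \<le> (21 * c1 / (4 * u^2)) * P * H + (7 / (2 * u)) * Q"
proof -
  have a0p: "a0 > 0" using sq by (metis zero_less_power)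
  have sP: "sq * P \<le> s"
    by (rule power2_le_imp_le) (use s sq P in \<open>auto simp: power_mult_distrib\<close>)
  have sb: "\<bar>b0\<bar> \<le> s"
    by (rule power2_le_imp_le) (use s a0p P in \<open>auto\<close>)
  have sup: "s \<le> \<bar>b0\<bar> + sq * P"
  proof (rule power2_le_imp_le)
    have "0 \<le> \<bar>b0\<bar> * (sq * P)" using sq P by simp
    moreover have "(\<bar>b0\<bar> + sq * P)^2 = b0^2 + 2 * (\<bar>b0\<bar> * (sq * P)) + sq^2 * P^2"
      by (simp add: power2_eq_square algebra_simps)
    ultimately show "s^2 \<le> (\<bar>b0\<bar> + sq * P)^2" using s sq by simp
    show "0 \<le> \<bar>b0\<bar> + sq * P" using sq P by simp
  qed
  have spos: "s > 0" using sP sq P by (smt (verit) mult_pos_pos)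
  have us: "u \<le> sq"
    by (rule power2_le_imp_le) (use u sq a0 W in \<open>auto simp: power_mono\<close>)
  have c0u: "2 * c0 \<le> u"
    by (rule power2_le_imp_le) (use u c0 W in \<open>auto simp: power_mult_distrib\<close>)
  define r where "r = W / sq"
  have r0: "0 \<le> r" using W sq by (simp add: r_def)
  have r1: "r \<le> 1/2"
  proof -
    have "W * 2 \<le> sq" using W c0u us by linarith
    then show ?thesis using sq by (simp add: r_def field_simps)
  qed
  have Wr: "W = r * sq" using sq by (simp add: r_def)
  have a0s: "a0 = sq * sq" using sq by (simp add: power2_eq_square)
  have B1: "\<bar>b0*qw/s\<bar> \<le> Q * W"
  proof -
    have "\<bar>b0*qw/s\<bar> = (\<bar>b0\<bar>/s) * \<bar>qw\<bar>" using spos by (simp add: abs_mult)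
    also have "\<dots> \<le> 1 * \<bar>qw\<bar>" using sb spos by (intro mult_right_mono) auto
    finally show ?thesis using qw by simp
  qed
  have B2: "\<bar>a0*pq/s\<bar> \<le> a0 * P * Q / (sq * P)"
  proof -
    have "\<bar>a0*pq/s\<bar> = a0 * \<bar>pq\<bar> / s" using spos a0p by (simp add: abs_mult)
    also have "\<dots> \<le> a0 * (P*Q) / s" using pq a0p spos by (intro divide_right_mono mult_left_mono) auto
    also have "\<dots> \<le> a0 * (P*Q) / (sq * P)" using sP sq P a0p Q spos
      by (intro divide_left_mono) auto
    finally show ?thesis by simp
  qed
  have B2': "a0 * P * Q / (sq * P) = sq * Q" using a0s sq P by (simp add: field_simps)
  have Bb: "\<bar>(-qw + (b0*qw + a0*pq)/s)/a0\<bar> \<le> (2 * Q * W + sq * Q) / a0"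
  proof -
    have "\<bar>-qw + (b0*qw + a0*pq)/s\<bar> \<le> \<bar>qw\<bar> + \<bar>b0*qw/s\<bar> + \<bar>a0*pq/s\<bar>"
      unfolding add_divide_distrib by (smt (verit))
    also have "\<dots> \<le> 2 * Q * W + sq * Q" using B1 B2 B2' qw by linarith
    finally show ?thesis using a0p by (simp add: divide_right_mono)
  qed
  have Bfin: "(2 * Q * W + sq * Q) / a0 \<le> 2 * Q / u"
  proof -
    have "(2 * Q * W + sq * Q) / a0 = Q * (2 * r + 1) / sq" using Wr a0s sq by (simp add: field_simps)
    also have "\<dots> \<le> Q * 2 / sq" using r1 Q sq by (intro divide_right_mono mult_left_mono) auto
    also have "\<dots> \<le> Q * 2 / u" using us u Q by (intro divide_left_mono) auto
    finally show ?thesis by (simp add: mult.commute)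
  qed
  have A1: "\<bar>b0*pl/s\<bar> \<le> P * lnn"
  proof -
    have "\<bar>b0*pl/s\<bar> = (\<bar>b0\<bar>/s) * \<bar>pl\<bar>" using spos by (simp add: abs_mult)
    also have "\<dots> \<le> 1 * \<bar>pl\<bar>" using sb spos by (intro mult_right_mono) auto
    finally show ?thesis using pl by simp
  qed
  have A2: "\<bar>wl*P^2/s\<bar> \<le> r * P * lnn"
  proof -
    have "\<bar>wl*P^2/s\<bar> = \<bar>wl\<bar> * P^2 / s" using spos by (simp add: abs_mult)
    also have "\<dots> \<le> (W*lnn) * P^2 / s" using wl spos by (intro divide_right_mono mult_right_mono) auto
    also have "\<dots> \<le> (W*lnn) * P^2 / (sq * P)" using sP sq P W lnn spos
      by (intro divide_left_mono) auto
    also have "\<dots> = r * P * lnn" using sq P by (simp add: r_def power2_eq_square field_simps)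
    finally show ?thesis .
  qed
  have A3: "\<bar>2*(s-b0)*wl/a0^2\<bar> \<le> 2 * (P * (2*W + sq)) * (W * lnn) / a0^2"
  proof -
    have "\<bar>s - b0\<bar> \<le> P * (2*W + sq)" using sup sb b0 by (simp add: algebra_simps)
    then have "\<bar>2*(s-b0)*wl\<bar> \<le> 2 * (P * (2*W + sq)) * (W * lnn)"
      using wl by (simp add: abs_mult mult_mono)
    then show ?thesis using a0p by (simp add: divide_right_mono)
  qed
  have A3': "2 * (P * (2*W + sq)) * (W * lnn) / a0^2 = P * lnn * (4*r^2 + 2*r) / a0"
    using Wr a0s sq by (simp add: field_simps power2_eq_square)
  have Ab: "\<bar>(-pl + (b0*pl - wl*P^2)/s)/a0 + 2*(s-b0)*wl/a0^2\<bar> \<le> P * lnn * (2 + 3*r + 4*r^2) / a0"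
  proof -
    have "\<bar>(-pl + (b0*pl - wl*P^2)/s)\<bar> \<le> \<bar>pl\<bar> + \<bar>b0*pl/s\<bar> + \<bar>wl*P^2/s\<bar>"
      unfolding diff_divide_distrib by (smt (verit))
    also have "\<dots> \<le> P * lnn * (2 + r)" using A1 A2 pl by (simp add: algebra_simps)
    finally have "\<bar>(-pl + (b0*pl - wl*P^2)/s)/a0\<bar> \<le> P * lnn * (2 + r) / a0"
      using a0p by (simp add: divide_right_mono)
    then have "\<bar>(-pl + (b0*pl - wl*P^2)/s)/a0 + 2*(s-b0)*wl/a0^2\<bar> \<le> P * lnn * (2 + r) / a0 + P * lnn * (4*r^2 + 2*r) / a0"
      using A3 A3' by linarith
    then show ?thesis by (simp add: add_divide_distrib[symmetric] algebra_simps)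
  qed
  have Afin: "P * lnn * (2 + 3*r + 4*r^2) / a0 \<le> (21 * c1 / (4 * u^2)) * P * H"
  proof -
    have "r*r \<le> (1/2)*(1/2)" using r0 r1 by (intro mult_mono) auto
    then have "4*r^2 \<le> 1" by (simp add: power2_eq_square)
    then have "2 + 3*r + 4*r^2 \<le> 21/4" using r1 by linarith
    then have "P * lnn * (2 + 3*r + 4*r^2) / a0 \<le> P * (c1 * H) * (21/4) / a0"
      using P lnn a0p r0 by (intro divide_right_mono mult_mono) (auto intro: mult_nonneg_nonneg)
    also have "\<dots> \<le> P * (c1 * H) * (21/4) / u^2"
    proof (rule divide_left_mono)
      have "u * u \<le> sq * sq" using us u by (intro mult_mono) auto
      then show "u^2 \<le> a0" using a0s by (simp add: power2_eq_square)
      show "0 \<le> P * (c1 * H) * (21/4)" using P lnn H by auto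
      show "0 < a0 * u^2" using a0p u(1) by (intro mult_pos_pos) auto
    qed
    also have "\<dots> = (21 * c1 / (4 * u^2)) * P * H" by (simp add: field_simps)
    finally show ?thesis .
  qed
  have "2 * Q / u \<le> (7 / (2 * u)) * Q" using u Q by (simp add: field_simps)
  moreover have "\<bar>(-qw + (b0*qw + a0*pq)/s)/a0 + ((-pl + (b0*pl - wl*P^2)/s)/a0 + 2*(s-b0)*wl/a0^2)\<bar>
     \<le> \<bar>(-qw + (b0*qw + a0*pq)/s)/a0\<bar> + \<bar>(-pl + (b0*pl - wl*P^2)/s)/a0 + 2*(s-b0)*wl/a0^2\<bar>"
    by (rule abs_triangle_ineq)
  ultimately show ?thesis using Bb Bfin Ab Afin by linarith
qed


theorem lemma18:
  fixes vbar c0 c1 a :: real and xO xD :: "real^2" and w :: "real^2 \<Rightarrow> real^2"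
    and \<xi> \<delta>\<xi> :: "real \<Rightarrow> real^2"
  assumes vbar_pos: "vbar > 0"
    and foci: "xO \<noteq> xD"
    and wC3: "C3 w"
    and w_lt: "\<forall>x. norm (w x) < vbar"
    and ell: "a > dist xO xD"
    and w_bd: "\<forall>x\<in>ellipse xO xD a. norm (w x) \<le> c0"
    and c0_bd: "c0 \<le> vbar / sqrt 5"
    and wx_bd: "\<forall>x\<in>ellipse xO xD a. onorm (frechet_derivative w (at x)) \<le> c1"
    and xi: "\<xi> \<in> trajX xO xD"
    and dxi: "\<delta>\<xi> \<in> deltaX"
  shows "\<forall>\<tau>\<in>{0<..<1}. \<forall>\<xi>t \<delta>\<xi>t D.
           (\<xi> has_vector_derivative \<xi>t) (at \<tau>) \<and>
           (\<delta>\<xi> has_vector_derivative \<delta>\<xi>t) (at \<tau>) \<and>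
           \<xi> \<tau> \<in> ellipse xO xD a \<and>
           ((\<lambda>t. fcost vbar w (\<xi> \<tau> + t *\<^sub>R \<delta>\<xi> \<tau>) (\<xi>t + t *\<^sub>R \<delta>\<xi>t))
              has_real_derivative D) (at 0)
         \<longrightarrow> \<bar>D\<bar> \<le> (21 * c1 / (4 * (vbar^2 - c0^2))) * norm \<xi>t * norm (\<delta>\<xi> \<tau>)
                    + (7 / (2 * sqrt (vbar^2 - c0^2))) * norm \<delta>\<xi>t"
  proof (intro ballI allI impI, elim conjE)
  fix \<tau> p q D
  assume tau: "\<tau> \<in> {0<..<1}" and pd: "(\<xi> has_vector_derivative p) (at \<tau>)"
    and qd: "(\<delta>\<xi> has_vector_derivative q) (at \<tau>)" and xin: "\<xi> \<tau> \<in> ellipse xO xD a"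
    and gD: "((\<lambda>t. fcost vbar w (\<xi> \<tau> + t *\<^sub>R \<delta>\<xi> \<tau>) (p + t *\<^sub>R q)) has_real_derivative D) (at 0)"
  define x where "x = \<xi> \<tau>"
  define h where "h = \<delta>\<xi> \<tau>"
  obtain D1 :: "real^2 \<Rightarrow> ((real^2) \<Rightarrow>\<^sub>L (real^2))" where D1: "\<And>y. (w has_derivative blinfun_apply (D1 y)) (at y)"
    using wC3 unfolding C3_def by blast
  define L where "L = blinfun_apply (D1 x)"
  have wd: "(w has_derivative L) (at x)" using D1 by (simp add: L_def)
  have blL: "bounded_linear L" unfolding L_def by (rule blinfun.bounded_linear_right)
  have onL: "onorm L \<le> c1" using wx_bd xin wd frechet_derivative_at unfolding x_def by metis
  have c1: "0 \<le> c1" using onL onorm_pos_le[OF blL] by linarith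
  define l where "l = L h"
  have ln: "norm l \<le> c1 * norm h"
    using onorm[OF blL, of h] onL by (simp add: l_def) (meson mult_right_mono norm_ge_zero order_trans)
  have W: "norm (w x) \<le> c0" using w_bd xin by (simp add: x_def)
  have c0: "0 \<le> c0" using W norm_ge_zero order_trans by blast
  have c05: "5 * c0^2 \<le> vbar^2"
  proof -
    have "c0 * sqrt 5 \<le> vbar" using c0_bd by (simp add: field_simps)
    then have "(c0 * sqrt 5)^2 \<le> vbar^2" using c0 by (intro power_mono) auto
    then show ?thesis by (simp add: power_mult_distrib mult.commute)
  qed
  define a0 where "a0 = vbar^2 - w x \<bullet> w x"
  have a0p: "a0 > 0"
  proof -
    have "norm (w x) < vbar" using w_lt by auto
    then have "(norm (w x))^2 < vbar^2" by (intro power_strict_mono) auto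
    then show ?thesis by (simp add: a0_def power2_norm_eq_inner)
  qed
  define u where "u = sqrt (vbar^2 - c0^2)"
  have upos: "u > 0" unfolding u_def using c05 vbar_pos
    by (smt (verit) real_sqrt_gt_zero zero_less_power)
  have u2: "u^2 = vbar^2 - c0^2" unfolding u_def using c05 vbar_pos
    by (smt (verit) real_sqrt_pow2 zero_le_power)
  have rhs0: "0 \<le> (21 * c1 / (4 * (vbar^2 - c0^2))) * norm p * norm h
                    + (7 / (2 * sqrt (vbar^2 - c0^2))) * norm q"
    using c1 u2 upos u_def by (smt (verit) divide_nonneg_pos mult_nonneg_nonneg norm_ge_zero zero_less_power)
  have fnn: "fcost vbar w y r \<ge> 0" for y r
  proof -
    have ay: "vbar^2 - w y \<bullet> w y > 0"
    proof -
      have "norm (w y) < vbar" using w_lt by auto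
      then have "(norm (w y))^2 < vbar^2" by (intro power_strict_mono) auto
      then show ?thesis by (simp add: power2_norm_eq_inner)
    qed
    have "\<bar>r \<bullet> w y\<bar> = sqrt ((r \<bullet> w y)^2)" by simp
    also have "\<dots> \<le> sqrt ((r \<bullet> w y)^2 + (vbar^2 - w y \<bullet> w y) * (r \<bullet> r))"
      using ay by (intro real_sqrt_le_mono) auto
    finally show ?thesis unfolding fcost_def using ay by (intro divide_nonneg_pos) auto
  qed
  show "\<bar>D\<bar> \<le> (21 * c1 / (4 * (vbar^2 - c0^2))) * norm p * norm (\<delta>\<xi> \<tau>)
                    + (7 / (2 * sqrt (vbar^2 - c0^2))) * norm q"
  proof (cases "p = 0")
    case True
    have "D = 0"
    proof (rule DERIV_local_min[OF gD, of 1])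
      show "\<forall>y. \<bar>0 - y\<bar> < 1 \<longrightarrow> fcost vbar w (\<xi> \<tau> + 0 *\<^sub>R \<delta>\<xi> \<tau>) (p + 0 *\<^sub>R q)
               \<le> fcost vbar w (\<xi> \<tau> + y *\<^sub>R \<delta>\<xi> \<tau>) (p + y *\<^sub>R q)"
      proof -
        have f0: "fcost vbar w y 0 = 0" for y by (simp add: fcost_def)
        show ?thesis using True by (simp add: f0 fnn)
      qed
    qed simp
    then show ?thesis using rhs0 by (simp add: h_def)
  next
    case False
    have Pp: "norm p > 0" using False by simp
    have Wd: "((\<lambda>t. w (x + t *\<^sub>R h)) has_derivative (\<lambda>t. t *\<^sub>R l)) (at 0)"
    proof -
      have aff: "((\<lambda>t. x + t *\<^sub>R h) has_derivative (\<lambda>t. t *\<^sub>R h)) (at 0)"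
        by (auto intro!: derivative_eq_intros)
      have wd': "(w has_derivative L) (at ((\<lambda>t. x + t *\<^sub>R h) 0))" using wd by simp
      show ?thesis using diff_chain_at[OF aff wd'] blL by (simp add: o_def l_def linear_simps)
    qed
    have affq: "((\<lambda>t. p + t *\<^sub>R q) has_derivative (\<lambda>t. t *\<^sub>R q)) (at 0)"
      by (auto intro!: derivative_eq_intros)
    define Bf where "Bf t = (p + t *\<^sub>R q) \<bullet> w (x + t *\<^sub>R h)" for t
    define Af where "Af t = w (x + t *\<^sub>R h) \<bullet> w (x + t *\<^sub>R h)" for t
    define Pf where "Pf t = (p + t *\<^sub>R q) \<bullet> (p + t *\<^sub>R q)" for t
    define b0 where "b0 = p \<bullet> w x"
    define qw where "qw = q \<bullet> w x"
    define pl where "pl = p \<bullet> l"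
    define wl where "wl = w x \<bullet> l"
    define pq where "pq = p \<bullet> q"
    have Bf0: "Bf 0 = b0" by (simp add: Bf_def b0_def)
    have Af0: "Af 0 = w x \<bullet> w x" by (simp add: Af_def)
    have Pf0: "Pf 0 = (norm p)^2" by (simp add: Pf_def power2_norm_eq_inner)
    have Bd: "(Bf has_real_derivative (qw + pl)) (at 0)" unfolding has_field_derivative_def Bf_def
      by (rule has_derivative_eq_rhs[OF has_derivative_inner[OF affq Wd]])
         (simp add: fun_eq_iff qw_def pl_def inner_simps algebra_simps)
    have Ad: "(Af has_real_derivative (2 * wl)) (at 0)" unfolding has_field_derivative_def Af_def
      by (rule has_derivative_eq_rhs[OF has_derivative_inner[OF Wd Wd]])
         (simp add: fun_eq_iff wl_def inner_simps algebra_simps inner_commute)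
    have Pd: "(Pf has_real_derivative (2 * pq)) (at 0)" unfolding has_field_derivative_def Pf_def
      by (rule has_derivative_eq_rhs[OF has_derivative_inner[OF affq affq]])
         (simp add: fun_eq_iff pq_def inner_simps algebra_simps inner_commute)
    note Sd = DERIV_add[OF DERIV_power[OF Bd, of 2] DERIV_mult[OF DERIV_diff[OF DERIV_const[of "vbar^2"] Ad] Pd]]
    define S0 where "S0 = b0^2 + a0 * (norm p)^2"
    have S0p: "S0 > 0" unfolding S0_def using a0p Pp by (smt (verit) mult_pos_pos zero_le_power2 zero_less_power)
    have S0e: "Bf 0 ^ 2 + (vbar^2 - Af 0) * Pf 0 = S0" by (simp add: Bf0 Af0 Pf0 S0_def a0_def)
    note sqd = DERIV_chain2[OF DERIV_real_sqrt Sd]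
    have sqd': "((\<lambda>t. sqrt (Bf t ^ 2 + (vbar^2 - Af t) * Pf t)) has_real_derivative
       (inverse (sqrt S0) / 2 * (of_nat 2 * ((qw + pl) * Bf 0 ^ (2 - Suc 0)) + ((0 - 2 * wl) * Pf 0 + 2 * pq * (vbar^2 - Af 0))))) (at 0)"
      using sqd S0p S0e by simp
    note Nd = DERIV_add[OF DERIV_minus[OF Bd] sqd']
    have Enz: "vbar^2 - Af 0 \<noteq> 0" using a0p by (simp add: Af0 a0_def)
    note Gd = DERIV_divide[OF Nd DERIV_diff[OF DERIV_const[of "vbar^2"] Ad] Enz]
    have feq: "(\<lambda>t. fcost vbar w (\<xi> \<tau> + t *\<^sub>R \<delta>\<xi> \<tau>) (p + t *\<^sub>R q)) =
       (\<lambda>t. (- Bf t + sqrt (Bf t ^ 2 + (vbar^2 - Af t) * Pf t)) / (vbar^2 - Af t))"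
      by (simp add: fun_eq_iff fcost_def Bf_def Af_def Pf_def x_def h_def)
    note Deq0 = DERIV_unique[OF gD[unfolded feq] Gd]
    define s where "s = sqrt S0"
    have spos: "s > 0" using S0p by (simp add: s_def)
    have Deq: "D = (-qw + (b0*qw + a0*pq)/s)/a0 + ((-pl + (b0*pl - wl*(norm p)^2)/s)/a0 + 2*(s-b0)*wl/a0^2)"
    proof -
      have e1: "vbar^2 - Af 0 = a0" by (simp add: Af0 a0_def)
      have e2: "sqrt (b0^2 + a0 * (norm p)^2) = s" by (simp add: s_def S0_def)
      from Deq0 have "D = ((-(qw+pl) + inverse s/2 * (real 2 * ((qw+pl) * b0) + ((0 - 2*wl) * (norm p)^2 + 2*pq*a0))) * a0 - (- b0 + s) * (0 - 2*wl)) / (a0 * a0)"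
        by (simp add: e1 e2 Bf0 Pf0 s_def)
      also have "\<dots> = (-qw + (b0*qw + a0*pq)/s)/a0 + ((-pl + (b0*pl - wl*(norm p)^2)/s)/a0 + 2*(s-b0)*wl/a0^2)"
        using spos a0p by (simp add: field_simps power2_eq_square; algebra)
      finally show ?thesis .
    qed
    have "\<bar>D\<bar> \<le> 21 * c1 / (4 * u^2) * norm p * norm h + 7 / (2 * u) * norm q"
      unfolding Deq
    proof (rule alg_bound[of a0 vbar "norm (w x)" "sqrt a0" c0 u s b0 "norm p" qw "norm q" pl "norm l" wl pq c1 "norm h"])
      show "a0 = vbar^2 - (norm (w x))^2" by (simp add: a0_def power2_norm_eq_inner)
      show "sqrt a0 > 0" "(sqrt a0)^2 = a0" using a0p by auto
      show "0 \<le> norm (w x)" "norm (w x) \<le> c0" "5 * c0^2 \<le> vbar^2" "u > 0" "u^2 = vbar^2 - c0^2"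
        using W c05 upos u2 by auto
      show "s \<ge> 0" "s^2 = b0^2 + a0 * (norm p)^2" using S0p by (auto simp: s_def S0_def)
      show "norm p > 0" by (rule Pp)
      show "\<bar>b0\<bar> \<le> norm p * norm (w x)" unfolding b0_def by (rule Cauchy_Schwarz_ineq2)
      show "\<bar>qw\<bar> \<le> norm q * norm (w x)" unfolding qw_def by (rule Cauchy_Schwarz_ineq2)
      show "\<bar>pl\<bar> \<le> norm p * norm l" unfolding pl_def by (rule Cauchy_Schwarz_ineq2)
      show "\<bar>wl\<bar> \<le> norm (w x) * norm l" unfolding wl_def by (rule Cauchy_Schwarz_ineq2)
      show "\<bar>pq\<bar> \<le> norm p * norm q" unfolding pq_def by (rule Cauchy_Schwarz_ineq2)
      show "norm l \<le> c1 * norm h" by (rule ln)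
    qed auto
    then show ?thesis using u2 by (simp add: u_def h_def)
  qed
qed

end
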